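(* Let $n,m\ge1$, $a\in\mathbb{R}^n$ with $\|a\|=1$, $d\in\mathbb{R}^m$ with $\|d\|<1$, and $\lambda\in\mathbb{R}^n$ with $\|\lambda\|=1$ and $\lambda\neq\pm a$. Let $$C=\{(x,y)\in\mathbb{R}^{n+m} : -\lambda^\mathsf{T} x+\nabla\phi_\lambda(\beta)^\mathsf{T} y\le r(\beta)\ \text{ for all }\beta\in\mathbb{R}^m,\ \|\beta\|=1\}$$ and $S=\{(x,y)\in\mathbb{R}^{n+m}:\|x\|\le\|y\|,\ a^\mathsf{T} x+d^\mathsf{T} y=-1\}$. Then $C$ is $S$-free, i.e. $\operatorname{int}(C)\cap S=\emptyset$.
   Context: $\|\cdot\|$ is the Euclidean norm. For $y\in\mathbb{R}^m$, $\phi_\lambda(y)=\max\{\lambda^\mathsf{T} x : x\in\mathbb{R}^n,\ \|x\|\le\|y\|,\ a^\mathsf{T} x+d^\mathsf{T} y\le 0\}$; under the hypotheses this is a finite convex function differentiable on $\mathbb{R}^m\setminus\{0\}$, and $\nabla\phi_\lambda(\beta)$ denotes its gradient. For $\|\beta\|=1$, $r(\beta)=0$ if $\lambda^\mathsf{T} a+d^\mathsf{T}\beta\le0$, and otherwise $r(\beta)=\dfrac{d^\mathsf{T}\beta+\lambda^\mathsf{T} a\,\phi_\lambda(\beta)}{\phi_\lambda(\beta)+d^\mathsf{T}\beta\,\lambda^\mathsf{T} a}$. *)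

theory Defs
  imports "HOL-Analysis.Analysis"
begin

definition phi :: "real^'n \<Rightarrow> real^'n \<Rightarrow> real^'m \<Rightarrow> real^'m \<Rightarrow> real" where
  "phi lam a d y = Sup {lam \<bullet> x | x. norm x \<le> norm y \<and> a \<bullet> x + d \<bullet> y \<le> 0}"

definition grad_phi :: "real^'n \<Rightarrow> real^'n \<Rightarrow> real^'m \<Rightarrow> real^'m \<Rightarrow> real^'m" where
  "grad_phi lam a d beta = (THE g. GDERIV (phi lam a d) beta :> g)"

definition r_fun :: "real^'n \<Rightarrow> real^'n \<Rightarrow> real^'m \<Rightarrow> real^'m \<Rightarrow> real" where
  "r_fun lam a d beta =
     (if lam \<bullet> a + d \<bullet> beta \<le> 0 then 0
      else (d \<bullet> beta + (lam \<bullet> a) * phi lam a d beta) /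
           (phi lam a d beta + (d \<bullet> beta) * (lam \<bullet> a)))"

definition C_set :: "real^'n \<Rightarrow> real^'n \<Rightarrow> real^'m \<Rightarrow> ((real^'n) \<times> (real^'m)) set" where
  "C_set lam a d = {(x, y). \<forall>beta. norm beta = 1 \<longrightarrow>
       - (lam \<bullet> x) + grad_phi lam a d beta \<bullet> y \<le> r_fun lam a d beta}"

definition S_set :: "real^'n \<Rightarrow> real^'m \<Rightarrow> ((real^'n) \<times> (real^'m)) set" where
  "S_set a d = {(x, y). norm x \<le> norm y \<and> a \<bullet> x + d \<bullet> y = -1}"

end

theory Submission
  imports Defs
begin

lemma sub2d:
  fixes c s q r :: real
  assumes "c^2+s^2=1" "s>0" "q \<le> c*r" "\<bar>q\<bar> \<le> r"
  shows "s * q \<le> c * sqrt(r^2-q^2)"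
proof -
  have qr: "q^2 \<le> r^2" using assms(4) by (metis abs_le_square_iff abs_of_nonneg abs_ge_zero order_trans)
  have v0: "sqrt(r^2-q^2) \<ge> 0" using qr by simp
  have vsq: "(sqrt(r^2-q^2))^2 = r^2-q^2" using qr by simp
  have s2: "s^2 = 1 - c^2" using assms(1) by linarith
  have e1: "(s * q)^2 = q^2 - c^2*q^2" by (simp add: power_mult_distrib s2 algebra_simps)
  have e2: "(c * sqrt(r^2-q^2))^2 = c^2*r^2 - c^2*q^2" by (simp only: power_mult_distrib vsq right_diff_distrib)
  have e3: "(c*r)^2 = c^2*r^2" by (simp add: power_mult_distrib)
  show ?thesis
  proof (cases "q \<ge> 0")
    case True
    show ?thesis
    proof (cases "c \<ge> 0")
      case True
      have "q^2 \<le> (c*r)^2" using \<open>q\<ge>0\<close> assms(3) by (simp add: power_mono)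
      then have "(s * q)^2 \<le> (c * sqrt(r^2-q^2))^2" using e1 e2 e3 by linarith
      then show ?thesis using True v0 by (meson mult_nonneg_nonneg power2_le_imp_le)
    next
      case False
      have "c * r \<le> 0" using False assms(4) \<open>q\<ge>0\<close> by (simp add: mult_nonpos_nonneg)
      then have "q = 0" "c * r = 0" using \<open>q \<ge> 0\<close> assms(3) by linarith+
      then have "r = 0" using False by simp
      then show ?thesis using assms by simp
    qed
  next
    case False
    show ?thesis
    proof (cases "c \<ge> 0")
      case True
      have "s * q \<le> 0" using False assms(2) by (simp add: mult_nonneg_nonpos)
      moreover have "0 \<le> c * sqrt(r^2-q^2)" using True v0 by simp
      ultimately show ?thesis by linarith
    next
      case cn: False
      have "r \<ge> 0" using assms(4) by linarith
      then have "c * r \<le> 0" using cn by (intro mult_nonpos_nonneg) auto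
      then have "\<bar>c*r\<bar> \<le> \<bar>q\<bar>" using False assms(3) by (simp add: abs_of_nonpos)
      then have "(c*r)^2 \<le> q^2" by (simp add: abs_le_square_iff)
      then have "(c * sqrt(r^2-q^2))^2 \<le> (s * q)^2" using e1 e2 e3 by linarith
      then have "\<bar>c * sqrt(r^2-q^2)\<bar> \<le> \<bar>s * q\<bar>" by (simp add: abs_le_square_iff)
      moreover have "c * sqrt(r^2-q^2) \<le> 0" using cn v0 by (simp add: mult_nonpos_nonneg)
      moreover have "s * q \<le> 0" using False assms(2) by (simp add: mult_nonneg_nonpos)
      ultimately show ?thesis by linarith
    qed
  qed
qed

lemma mono2d:
  fixes c s q r al :: real
  assumes "c^2+s^2=1" "s>0" "al \<le> q" "q \<le> c*r" "\<bar>q\<bar> \<le> r" "\<bar>al\<bar> \<le> r"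
  shows "c * al + s * sqrt(r^2-al^2) \<le> c * q + s * sqrt(r^2-q^2)"
proof -
  define u where "u = sqrt(r^2-al^2)"
  define v where "v = sqrt(r^2-q^2)"
  have qr: "q^2 \<le> r^2" using assms(5) by (metis abs_le_square_iff abs_of_nonneg abs_ge_zero order_trans)
  have ar: "al^2 \<le> r^2" using assms(6) by (metis abs_le_square_iff abs_of_nonneg abs_ge_zero order_trans)
  have u0: "u \<ge> 0" "u^2 = r^2 - al^2" using ar by (simp_all add: u_def)
  have v0: "v \<ge> 0" "v^2 = r^2 - q^2" using qr by (simp_all add: v_def)
  have h1: "s * al \<le> c * u" unfolding u_def using sub2d[OF assms(1,2)] assms by smt
  have h2: "s * q \<le> c * v" unfolding v_def using sub2d[OF assms(1,2) assms(4,5)] .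
  have h3: "s * (q + al) \<le> c * (u + v)" using h1 h2 by (simp add: algebra_simps)
  have h4: "(q - al) * (s * (q + al)) \<le> (q - al) * (c * (u + v))"
    using h3 assms(3) by (intro mult_left_mono) auto
  have h5: "(q - al) * (q + al) = (u - v) * (u + v)" using u0 v0 by (simp add: algebra_simps power2_eq_square)
  have "(s * (u - v)) * (u + v) = s * ((u - v) * (u + v))" by simp
  also have "\<dots> = (q - al) * (s * (q + al))" using h5 by simp
  also have "\<dots> \<le> (q - al) * (c * (u + v))" by (rule h4)
  also have "\<dots> = (c * (q - al)) * (u + v)" by simp
  finally have h6: "(s * (u - v)) * (u + v) \<le> (c * (q - al)) * (u + v)" .
  show ?thesis
  proof (cases "u + v > 0")
    case True
    then have "s * (u - v) \<le> c * (q - al)" using h6 by (simp add: mult_le_cancel_right)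
    then show ?thesis unfolding u_def[symmetric] v_def[symmetric] by (simp add: algebra_simps)
  next
    case False
    then have "u = 0" "v = 0" using u0 v0 by linarith+
    then have "al^2 = r^2" "q^2 = r^2" using u0 v0 by simp_all
    have "c * al \<le> c * q"
    proof (cases "c \<ge> 0")
      case True then show ?thesis using assms(3) by (simp add: mult_left_mono)
    next
      case False
      have "c * r \<le> 0" using False assms(5) by (simp add: mult_nonpos_nonneg)
      then have "q = - r" using \<open>q^2 = r^2\<close> assms(4) assms(5) by (metis abs_le_square_iff abs_minus_cancel abs_of_nonpos order_trans power2_eq_iff)
      then have "al = q" using assms(3) assms(6) by linarith
      then show ?thesis by simp
    qed
    then show ?thesis unfolding u_def[symmetric] v_def[symmetric] using \<open>u = 0\<close> \<open>v = 0\<close> by simp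
  qed
qed

lemma decomp:
  fixes lam a x :: "real^'n"
  assumes "norm a = 1" "norm lam = 1"
  shows "lam \<bullet> x \<le> (lam \<bullet> a) * (a \<bullet> x) + sqrt(1 - (lam \<bullet> a)^2) * sqrt((norm x)^2 - (a \<bullet> x)^2)"
proof -
  define c where "c = lam \<bullet> a"
  define w where "w = lam - c *\<^sub>R a"
  define xp where "xp = x - (a \<bullet> x) *\<^sub>R a"
  have aa: "a \<bullet> a = 1" using assms(1) by (simp add: dot_square_norm)
  have ll: "lam \<bullet> lam = 1" using assms(2) by (simp add: dot_square_norm)
  have e1: "lam \<bullet> x = c * (a \<bullet> x) + w \<bullet> xp"
    unfolding w_def xp_def c_def by (simp add: inner_diff_left inner_diff_right aa inner_commute algebra_simps)
  have nw: "(norm w)^2 = 1 - c^2"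
    unfolding w_def power2_norm_eq_inner by (simp add: inner_diff_left inner_diff_right aa ll c_def inner_commute power2_eq_square algebra_simps)
  have nx: "(norm xp)^2 = (norm x)^2 - (a \<bullet> x)^2"
    unfolding xp_def power2_norm_eq_inner by (simp add: inner_diff_left inner_diff_right aa inner_commute power2_eq_square algebra_simps)
  have "w \<bullet> xp \<le> norm w * norm xp" by (rule norm_cauchy_schwarz)
  also have "norm w = sqrt(1 - c^2)" using nw by (metis norm_ge_zero real_sqrt_unique)
  also have "norm xp = sqrt((norm x)^2 - (a \<bullet> x)^2)" using nx by (metis norm_ge_zero real_sqrt_unique)
  finally show ?thesis using e1 c_def by simp
qed

lemma sandwich_deriv:
  fixes f L U :: "'a::real_normed_vector \<Rightarrow> real"
  assumes ev: "eventually (\<lambda>z. L z \<le> f z \<and> f z \<le> U z) (at x)"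
    and eL: "L x = f x" and eU: "U x = f x"
    and dL: "(L has_derivative D) (at x)" and dU: "(U has_derivative D) (at x)"
  shows "(f has_derivative D) (at x)"
proof -
  have bl: "bounded_linear D" using dL by (rule has_derivative_bounded_linear)
  have tL: "((\<lambda>y. ((L y - L x) - D (y - x)) /\<^sub>R norm (y - x)) \<longlongrightarrow> 0) (at x)"
    using dL has_derivative_at_within[of L D x UNIV] by simp
  have tU: "((\<lambda>y. ((U y - U x) - D (y - x)) /\<^sub>R norm (y - x)) \<longlongrightarrow> 0) (at x)"
    using dU has_derivative_at_within[of U D x UNIV] by simp
  have ne: "eventually (\<lambda>y. y \<noteq> x) (at x)" by (simp add: eventually_at_filter)
  have ev1: "eventually (\<lambda>y. ((L y - L x) - D (y - x)) /\<^sub>R norm (y - x) \<le> ((f y - f x) - D (y - x)) /\<^sub>R norm (y - x)) (at x)"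
    using ev ne by eventually_elim (use eL in \<open>auto simp: divide_right_mono\<close>)
  have ev2: "eventually (\<lambda>y. ((f y - f x) - D (y - x)) /\<^sub>R norm (y - x) \<le> ((U y - U x) - D (y - x)) /\<^sub>R norm (y - x)) (at x)"
    using ev ne by eventually_elim (use eU in \<open>auto simp: divide_right_mono\<close>)
  have "((\<lambda>y. ((f y - f x) - D (y - x)) /\<^sub>R norm (y - x)) \<longlongrightarrow> 0) (at x)"
    by (rule tendsto_sandwich[OF ev1 ev2 tL tU])
  then show ?thesis using bl has_derivative_at_within[of f D x UNIV] by simp
qed

lemma deriv_to_gderiv:
  fixes f :: "real^'m \<Rightarrow> real"
  assumes "(f has_derivative D) (at x)"
  shows "GDERIV f x :> adjoint D 1"
proof -
  have "linear D" using assms has_derivative_linear by blast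
  then have "D = (\<lambda>h. h \<bullet> adjoint D 1)" using adjoint_works[of D] by fastforce
  then show ?thesis unfolding gderiv_def using assms by simp
qed

lemma gderiv_unique:
  fixes f :: "real^'m \<Rightarrow> real"
  assumes "GDERIV f x :> g1" "GDERIV f x :> g2"
  shows "g1 = g2"
proof -
  have "(\<lambda>h. h \<bullet> g1) = (\<lambda>h. h \<bullet> g2)" using assms unfolding gderiv_def by (rule has_derivative_unique)
  then have "(g1 - g2) \<bullet> g1 = (g1 - g2) \<bullet> g2" by metis
  then have "(g1 - g2) \<bullet> (g1 - g2) = 0" by (simp add: inner_diff_right)
  then show ?thesis by simp
qed

lemma euler:
  fixes f :: "real^'m \<Rightarrow> real"
  assumes g: "GDERIV f b :> g" and hom: "\<And>t z. t > 0 \<Longrightarrow> f (t *\<^sub>R z) = t * f z"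
  shows "g \<bullet> b = f b"
proof -
  have d1: "((\<lambda>h::real. (1 + h) *\<^sub>R b) has_derivative (\<lambda>h. h *\<^sub>R b)) (at 0)"
    by (auto intro!: derivative_eq_intros)
  have d2: "(f has_derivative (\<lambda>h. h \<bullet> g)) (at ((\<lambda>h::real. (1 + h) *\<^sub>R b) 0))"
    using g unfolding gderiv_def by simp
  have c1: "((\<lambda>h::real. f ((1 + h) *\<^sub>R b)) has_derivative (\<lambda>h. (h *\<^sub>R b) \<bullet> g)) (at 0)"
    using has_derivative_compose[OF d1 d2] by simp
  have d3: "((\<lambda>h::real. (1 + h) * f b) has_derivative (\<lambda>h. h * f b)) (at 0)"
    by (auto intro!: derivative_eq_intros)
  have c2: "((\<lambda>h::real. f ((1 + h) *\<^sub>R b)) has_derivative (\<lambda>h. h * f b)) (at 0)"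
  proof (rule has_derivative_transform_within_open[OF d3, of "{-1<..}"])
    fix h :: real assume "h \<in> {-1<..}"
    then show "(1 + h) * f b = f ((1 + h) *\<^sub>R b)" using hom[of "1 + h" b] by simp
  qed auto
  have "(\<lambda>h::real. (h *\<^sub>R b) \<bullet> g) = (\<lambda>h. h * f b)" using has_derivative_unique[OF c1 c2] .
  then have "((1::real) *\<^sub>R b) \<bullet> g = 1 * f b" by metis
  then show ?thesis by (simp add: inner_commute)
qed

lemma final_ineq:
  fixes r dl W A :: real
  assumes A: "A = 1 - dl^2" "A > 0" and r: "r > 0" and W: "W \<ge> 0" "W^2 = r^2 * A - 2 * r * dl - 1"
  shows "dl / sqrt A \<le> r * sqrt A - W"
proof -
  define q where "q = sqrt A"
  have q0: "q > 0" and q2: "q^2 = A" using A(2) by (simp_all add: q_def)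
  define V where "V = (r * A - dl) / q"
  have Veq: "V = r * q - dl / q" unfolding V_def using q0 q2 by (simp add: field_simps power2_eq_square)
  have rA: "r * A - dl \<ge> 0"
  proof (cases "dl \<le> 0")
    case True
    have "r * A > 0" using r A(2) by simp
    then show ?thesis using True by linarith
  next
    case False
    have "r^2 * A \<ge> 2 * r * dl + 1" using W(2) zero_le_power2[of W] by linarith
    moreover have "r * dl > 0" using False r by simp
    moreover have "r * (r * A) = r^2 * A" by (simp add: power2_eq_square)
    ultimately have "r * (r * A) \<ge> r * dl" by linarith
    then show ?thesis using r by (simp add: mult_le_cancel_left_pos)
  qed
  have V0: "V \<ge> 0" unfolding V_def using rA q0 by simp
  have "V^2 = (r * A - dl)^2 / A" unfolding V_def using q2 by (simp add: power_divide)
  also have "\<dots> = r^2 * A - 2 * r * dl + dl^2 / A" using A(2) by (simp add: field_simps power2_eq_square)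
  finally have "V^2 = r^2 * A - 2 * r * dl + dl^2 / A" .
  moreover have "dl^2 / A \<ge> 0" using A(2) by simp
  ultimately have "V^2 \<ge> W^2" using W(2) by linarith
  then have "W \<le> V" by (rule power2_le_imp_le[OF _ V0])
  then show ?thesis using Veq q_def by simp
qed

definition Ff :: "real^'n \<Rightarrow> real^'n \<Rightarrow> real^'m \<Rightarrow> real^'m \<Rightarrow> real" where
  "Ff lam a d z = - (lam \<bullet> a) * (d \<bullet> z) + sqrt(1 - (lam \<bullet> a)^2) * sqrt((norm z)^2 - (d \<bullet> z)^2)"

context
  fixes lam a :: "real^'n" and d :: "real^'m"
  assumes na: "norm a = 1" and nl: "norm lam = 1" and nd: "norm d \<le> 1" and cl: "\<bar>lam \<bullet> a\<bar> < 1"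
begin

lemma dz_le: "\<bar>d \<bullet> z\<bar> \<le> norm z"
  using Cauchy_Schwarz_ineq2[of d z] nd by (smt (verit) mult_right_le_one_le norm_ge_zero mult.commute)

lemma dz_sq: "(d \<bullet> z)^2 \<le> (norm z)^2"
  using dz_le by (metis abs_le_square_iff abs_norm_cancel)

lemma phi_set_ne: "{lam \<bullet> x | x. norm x \<le> norm z \<and> a \<bullet> x + d \<bullet> z \<le> 0} \<noteq> {}"
proof -
  have "norm (- norm z *\<^sub>R a) \<le> norm z" using na by simp
  moreover have "a \<bullet> (- norm z *\<^sub>R a) + d \<bullet> z \<le> 0"
    using na dz_le[of z] by (simp add: dot_square_norm)
  ultimately show ?thesis by blast
qed

lemma phi_set_bdd: "bdd_above {lam \<bullet> x | x. norm x \<le> norm z \<and> a \<bullet> x + d \<bullet> z \<le> 0}"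
proof (rule bdd_aboveI[where M="norm z"])
  fix y assume "y \<in> {lam \<bullet> x | x. norm x \<le> norm z \<and> a \<bullet> x + d \<bullet> z \<le> 0}"
  then obtain x where "y = lam \<bullet> x" "norm x \<le> norm z" by blast
  then show "y \<le> norm z" using norm_cauchy_schwarz[of lam x] nl by simp
qed

lemma phi_le: "phi lam a d z \<le> norm z"
  unfolding phi_def
proof (rule cSup_least[OF phi_set_ne])
  fix y assume "y \<in> {lam \<bullet> x | x. norm x \<le> norm z \<and> a \<bullet> x + d \<bullet> z \<le> 0}"
  then obtain x where "y = lam \<bullet> x" "norm x \<le> norm z" by blast
  then show "y \<le> norm z" using norm_cauchy_schwarz[of lam x] nl by simp
qed

lemma phi_ge: "norm x \<le> norm z \<Longrightarrow> a \<bullet> x + d \<bullet> z \<le> 0 \<Longrightarrow> lam \<bullet> x \<le> phi lam a d z"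
  unfolding phi_def by (rule cSup_upper[OF _ phi_set_bdd]) blast

lemma phi_geN: "(lam \<bullet> a) * norm z + d \<bullet> z \<le> 0 \<Longrightarrow> norm z \<le> phi lam a d z"
proof -
  assume h: "(lam \<bullet> a) * norm z + d \<bullet> z \<le> 0"
  have "norm (norm z *\<^sub>R lam) \<le> norm z" using nl by simp
  moreover have "a \<bullet> (norm z *\<^sub>R lam) + d \<bullet> z \<le> 0" using h by (simp add: inner_commute mult.commute)
  ultimately have "lam \<bullet> (norm z *\<^sub>R lam) \<le> phi lam a d z" by (rule phi_ge)
  then show ?thesis using nl by (simp add: dot_square_norm)
qed

lemma phi_eqN: "(lam \<bullet> a) * norm z + d \<bullet> z \<le> 0 \<Longrightarrow> phi lam a d z = norm z"
  using phi_geN phi_le by (meson order_antisym)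

lemma F_le_phi: "Ff lam a d z \<le> phi lam a d z"
proof -
  define c where "c = lam \<bullet> a"
  define s where "s = sqrt(1 - c^2)"
  define t where "t = d \<bullet> z"
  define q where "q = sqrt((norm z)^2 - t^2)"
  have c2: "c^2 < 1" using cl unfolding c_def by (metis abs_less_iff abs_square_less_1)
  have s0: "s > 0" unfolding s_def using c2 by simp
  have s2: "s^2 = 1 - c^2" unfolding s_def using c2 by simp
  have q2: "q^2 = (norm z)^2 - t^2" unfolding q_def t_def using dz_sq by simp
  have aa: "a \<bullet> a = 1" using na by (simp add: dot_square_norm)
  have ll: "lam \<bullet> lam = 1" using nl by (simp add: dot_square_norm)
  define x where "x = (- t) *\<^sub>R a + (q / s) *\<^sub>R (lam - c *\<^sub>R a)"
  have ax: "a \<bullet> x = - t" unfolding x_def by (simp add: inner_diff_right aa c_def inner_commute)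
  have lx: "lam \<bullet> x = - c * t + s * q"
  proof -
    have "lam \<bullet> x = - c * t + (q / s) * (1 - c^2)" unfolding x_def
      by (simp add: inner_diff_right ll c_def power2_eq_square)
    also have "(q / s) * (1 - c^2) = (q / s) * (s * s)" using s2 by (simp add: power2_eq_square)
    also have "\<dots> = s * q" using s0 by simp
    finally show ?thesis .
  qed
  have xx: "(norm x)^2 = (norm z)^2"
  proof -
    have "(norm x)^2 = x \<bullet> x" by (simp add: dot_square_norm)
    also have "\<dots> = t^2 + (q/s)^2 * (1 - c^2)" unfolding x_def
      by (simp add: inner_diff_right inner_diff_left inner_add_left inner_add_right aa ll c_def inner_commute power2_eq_square algebra_simps)
    also have "(q/s)^2 * (1 - c^2) = (q/s)^2 * s^2" by (simp add: s2)
    also have "(q/s)^2 * s^2 = q^2" using s0 by (simp add: power_divide)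
    also have "t^2 + q^2 = (norm z)^2" using q2 by simp
    finally show ?thesis .
  qed
  have "norm x \<le> norm z" using xx by (simp add: power2_eq_iff_nonneg)
  moreover have "a \<bullet> x + d \<bullet> z \<le> 0" using ax t_def by simp
  ultimately have "lam \<bullet> x \<le> phi lam a d z" by (rule phi_ge)
  then show ?thesis unfolding Ff_def using lx c_def s_def t_def q_def by simp
qed

lemma phi_leF:
  assumes h: "(lam \<bullet> a) * norm z + d \<bullet> z \<ge> 0"
  shows "phi lam a d z \<le> Ff lam a d z"
  unfolding phi_def
proof (rule cSup_least[OF phi_set_ne])
  define c where "c = lam \<bullet> a"
  define s where "s = sqrt(1 - c^2)"
  define t where "t = d \<bullet> z"
  have c2: "c^2 < 1" using cl unfolding c_def by (metis abs_less_iff abs_square_less_1)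
  have s0: "s > 0" unfolding s_def using c2 by simp
  have s2: "c^2 + s^2 = 1" unfolding s_def using c2 by simp
  fix y assume "y \<in> {lam \<bullet> x | x. norm x \<le> norm z \<and> a \<bullet> x + d \<bullet> z \<le> 0}"
  then obtain x where x: "y = lam \<bullet> x" "norm x \<le> norm z" "a \<bullet> x + d \<bullet> z \<le> 0" by blast
  define al where "al = a \<bullet> x"
  have alx: "\<bar>al\<bar> \<le> norm x" unfolding al_def using Cauchy_Schwarz_ineq2[of a x] na by simp
  have ax2: "al^2 \<le> (norm x)^2" using alx by (metis abs_le_square_iff abs_norm_cancel)
  have xz2: "(norm x)^2 \<le> (norm z)^2" using x(2) by (simp add: power_mono)
  have "y \<le> c * al + s * sqrt((norm x)^2 - al^2)"
    using decomp[OF na nl, of x] x(1) unfolding c_def s_def al_def by simp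
  also have "\<dots> \<le> c * al + s * sqrt((norm z)^2 - al^2)"
    using s0 xz2 by (simp add: mult_left_mono)
  also have "\<dots> \<le> c * (- t) + s * sqrt((norm z)^2 - (- t)^2)"
  proof (rule mono2d[OF s2 s0])
    show "al \<le> - t" using x(3) unfolding al_def t_def by simp
    show "- t \<le> c * norm z" using h unfolding c_def t_def by simp
    show "\<bar>- t\<bar> \<le> norm z" using dz_le unfolding t_def by simp
    show "\<bar>al\<bar> \<le> norm z" using alx x(2) by simp
  qed
  also have "\<dots> = Ff lam a d z" unfolding Ff_def c_def s_def t_def by simp
  finally show "y \<le> Ff lam a d z" .
qed

lemma phi_eqF: "(lam \<bullet> a) * norm z + d \<bullet> z \<ge> 0 \<Longrightarrow> phi lam a d z = Ff lam a d z"
  using phi_leF F_le_phi by (meson order_antisym)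

lemma F_le_N: "Ff lam a d z \<le> norm z"
  using F_le_phi phi_le order_trans by blast

lemma Ff_hom: "t > 0 \<Longrightarrow> Ff lam a d (t *\<^sub>R z) = t * Ff lam a d z"
proof -
  assume t: "t > 0"
  have "(norm (t *\<^sub>R z))^2 - (d \<bullet> (t *\<^sub>R z))^2 = t^2 * ((norm z)^2 - (d \<bullet> z)^2)"
    using t by (simp add: power_mult_distrib algebra_simps)
  then have "sqrt((norm (t *\<^sub>R z))^2 - (d \<bullet> (t *\<^sub>R z))^2) = t * sqrt((norm z)^2 - (d \<bullet> z)^2)"
    using t by (simp add: real_sqrt_mult)
  then show ?thesis unfolding Ff_def by (simp add: algebra_simps)
qed

lemma phi_hom: "t > 0 \<Longrightarrow> phi lam a d (t *\<^sub>R z) = t * phi lam a d z"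
proof -
  assume t: "t > 0"
  have sg: "(lam \<bullet> a) * norm (t *\<^sub>R z) + d \<bullet> (t *\<^sub>R z) = t * ((lam \<bullet> a) * norm z + d \<bullet> z)"
    using t by (simp add: algebra_simps)
  show ?thesis
  proof (cases "(lam \<bullet> a) * norm z + d \<bullet> z \<le> 0")
    case True
    then have "(lam \<bullet> a) * norm (t *\<^sub>R z) + d \<bullet> (t *\<^sub>R z) \<le> 0" using sg t by (simp add: mult_nonneg_nonpos)
    then show ?thesis using phi_eqN True t by simp
  next
    case False
    then have "(lam \<bullet> a) * norm (t *\<^sub>R z) + d \<bullet> (t *\<^sub>R z) \<ge> 0" using sg t by simp
    then show ?thesis using phi_eqF False Ff_hom t by simp
  qed
qed

lemma Ff_deriv:
  assumes nd1: "norm d < 1" and b: "b \<noteq> 0"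
  shows "\<exists>D. (Ff lam a d has_derivative D) (at b)"
proof -
  have "\<bar>d \<bullet> b\<bar> \<le> norm d * norm b" by (rule Cauchy_Schwarz_ineq2)
  also have "\<dots> < norm b" using nd1 b by simp
  finally have "(d \<bullet> b)^2 < (norm b)^2" by (metis abs_le_square_iff abs_norm_cancel less_le not_le power2_le_imp_le abs_ge_zero norm_ge_zero abs_less_iff abs_square_less_1 abs_le_D1 order.strict_iff_order power_strict_mono zero_less_two) 
  then have pos: "0 < b \<bullet> b - (d \<bullet> b)^2" by (simp add: dot_square_norm)
  have e: "Ff lam a d = (\<lambda>z. - (lam \<bullet> a) * (d \<bullet> z) + sqrt(1 - (lam \<bullet> a)^2) * sqrt(z \<bullet> z - (d \<bullet> z)^2))"
    unfolding Ff_def by (simp add: dot_square_norm)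
  show ?thesis unfolding e using pos by (auto intro!: derivative_eq_intros exI)
qed

lemma phi_deriv:
  assumes nd1: "norm d < 1" and b: "b \<noteq> 0"
  shows "\<exists>D. (phi lam a d has_derivative D) (at b)"
proof -
  obtain DF where DF: "(Ff lam a d has_derivative DF) (at b)" using Ff_deriv[OF nd1 b] by blast
  have DN: "(norm has_derivative (\<lambda>h. h \<bullet> sgn b)) (at b)" using has_derivative_norm[OF b] .
  define sg where "sg = (\<lambda>z. (lam \<bullet> a) * norm z + d \<bullet> z)"
  have csg: "continuous_on UNIV sg" unfolding sg_def by (intro continuous_intros)
  consider "sg b > 0" | "sg b < 0" | "sg b = 0" by linarith
  then show ?thesis
  proof cases
    case 1
    have op: "open {z. 0 < sg z}" by (rule open_Collect_less[OF continuous_on_const csg])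
    have "(phi lam a d has_derivative DF) (at b)"
    proof (rule has_derivative_transform_within_open[OF DF op])
      show "b \<in> {z. 0 < sg z}" using 1 by simp
      fix z assume "z \<in> {z. 0 < sg z}"
      then show "Ff lam a d z = phi lam a d z" using phi_eqF[of z] unfolding sg_def by simp
    qed
    then show ?thesis by blast
  next
    case 2
    have op: "open {z. sg z < 0}" by (rule open_Collect_less[OF csg continuous_on_const])
    have "(phi lam a d has_derivative (\<lambda>h. h \<bullet> sgn b)) (at b)"
    proof (rule has_derivative_transform_within_open[OF DN op])
      show "b \<in> {z. sg z < 0}" using 2 by simp
      fix z assume "z \<in> {z. sg z < 0}"
      then show "norm z = phi lam a d z" using phi_eqN[of z] unfolding sg_def by simp
    qed
    then show ?thesis by blast
  next
    case 3
    have eF: "Ff lam a d b = phi lam a d b" using phi_eqF[of b] 3 unfolding sg_def by simp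
    have eN: "norm b = phi lam a d b" using phi_eqN[of b] 3 unfolding sg_def by simp
    have dd: "((\<lambda>z. norm z - Ff lam a d z) has_derivative (\<lambda>h. h \<bullet> sgn b - DF h)) (at b)"
      using DN DF by (rule has_derivative_diff)
    have "(\<lambda>h. h \<bullet> sgn b - DF h) = (\<lambda>h. 0)"
    proof (rule has_derivative_local_min[OF dd])
      show "eventually (\<lambda>y. norm b - Ff lam a d b \<le> norm y - Ff lam a d y) (at b)"
        using eF eN F_le_N by (intro always_eventually) simp
    qed
    then have same: "DF = (\<lambda>h. h \<bullet> sgn b)" by (metis eq_iff_diff_eq_0)
    have "(phi lam a d has_derivative DF) (at b)"
    proof (rule sandwich_deriv[where L="Ff lam a d" and U=norm and f="phi lam a d" and x=b and D=DF])
      show "Ff lam a d b = phi lam a d b" by (rule eF)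
      show "norm b = phi lam a d b" by (rule eN)
      show "(Ff lam a d has_derivative DF) (at b)" by (rule DF)
      show "eventually (\<lambda>z. Ff lam a d z \<le> phi lam a d z \<and> phi lam a d z \<le> norm z) (at b)"
        using F_le_phi phi_le by (intro always_eventually) simp
      show "(norm has_derivative DF) (at b)" using DN same by simp
    qed
    then show ?thesis by blast
  qed
qed

lemma grad_euler:
  assumes nd1: "norm d < 1" and b: "b \<noteq> 0"
  shows "grad_phi lam a d b \<bullet> b = phi lam a d b"
proof -
  obtain D where D: "(phi lam a d has_derivative D) (at b)" using phi_deriv[OF nd1 b] by blast
  have G: "GDERIV (phi lam a d) b :> adjoint D 1" by (rule deriv_to_gderiv[OF D])
  have "grad_phi lam a d b = adjoint D 1"
    unfolding grad_phi_def
  proof (rule the_equality)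
    show "GDERIV (phi lam a d) b :> adjoint D 1" by (rule G)
    fix g assume "GDERIV (phi lam a d) b :> g"
    then show "g = adjoint D 1" using G by (rule gderiv_unique)
  qed
  then show ?thesis using euler[OF G phi_hom] by simp
qed

lemma key:
  assumes nd1: "norm d < 1" and xy: "norm x \<le> norm y" "a \<bullet> x + d \<bullet> y = -1"
  shows "y \<noteq> 0 \<and> r_fun lam a d (y /\<^sub>R norm y) \<le> - (lam \<bullet> x) + grad_phi lam a d (y /\<^sub>R norm y) \<bullet> y"
proof -
  have y0: "y \<noteq> 0" using xy by auto
  define rh where "rh = norm y"
  have rh0: "rh > 0" using y0 by (simp add: rh_def)
  define b where "b = y /\<^sub>R rh"
  have nb: "norm b = 1" using rh0 by (simp add: b_def rh_def)
  have b0: "b \<noteq> 0" using nb by auto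
  have yb: "y = rh *\<^sub>R b" using rh0 by (simp add: b_def)
  have gy: "grad_phi lam a d b \<bullet> y = rh * phi lam a d b"
    using grad_euler[OF nd1 b0] yb by (simp add: inner_commute)
  define c where "c = lam \<bullet> a"
  define s where "s = sqrt(1 - c^2)"
  define dl where "dl = d \<bullet> b"
  have c2: "c^2 < 1" using cl unfolding c_def by (metis abs_less_iff abs_square_less_1)
  have s0: "s > 0" unfolding s_def using c2 by simp
  have cs: "c^2 + s^2 = 1" unfolding s_def using c2 by simp
  have dly: "d \<bullet> y = rh * dl" unfolding dl_def yb by simp
  have "r_fun lam a d b \<le> - (lam \<bullet> x) + rh * phi lam a d b"
  proof (cases "c + dl \<le> 0")
    case True
    then have r0: "r_fun lam a d b = 0" unfolding r_fun_def c_def dl_def by simp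
    have "phi lam a d b = 1" using phi_eqN[of b] True nb unfolding c_def dl_def by simp
    moreover have "lam \<bullet> x \<le> rh" using norm_cauchy_schwarz[of lam x] nl xy(1) rh_def by simp
    ultimately show ?thesis using r0 by simp
  next
    case False
    have dlb: "\<bar>dl\<bar> < 1"
    proof -
      have "\<bar>dl\<bar> \<le> norm d * norm b" unfolding dl_def by (rule Cauchy_Schwarz_ineq2)
      then show ?thesis using nd1 nb by simp
    qed
    define A where "A = 1 - dl^2"
    have A0: "A > 0" unfolding A_def using dlb by (metis abs_square_less_1 diff_gt_0_iff_gt)
    define q where "q = sqrt A"
    have q0: "q > 0" using A0 by (simp add: q_def)
    have P: "phi lam a d b = - c * dl + s * q"
      using phi_eqF[of b] False nb unfolding c_def dl_def Ff_def s_def q_def A_def by simp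
    have r1: "r_fun lam a d b = (dl + c * (- c * dl + s * q)) / ((- c * dl + s * q) + dl * c)"
      using False P unfolding r_fun_def c_def dl_def by simp
    have s2: "1 - c^2 = s^2" using cs by linarith
    have "(dl + c * (- c * dl + s * q)) = dl * (1 - c^2) + s * (c * q)" by (simp add: algebra_simps power2_eq_square)
    also have "\<dots> = s * (s * dl + c * q)" unfolding s2 by (simp add: algebra_simps power2_eq_square)
    finally have "(dl + c * (- c * dl + s * q)) = s * (s * dl + c * q)" .
    moreover have "(- c * dl + s * q) + dl * c = s * q" by simp
    ultimately have r2: "r_fun lam a d b = (s * dl + c * q) / q" using r1 s0 by simp
    have r3: "r_fun lam a d b = c + s * (dl / q)" using r2 q0 by (simp add: field_simps)
    define al where "al = a \<bullet> x"
    have al: "al = - 1 - rh * dl" using xy(2) dly unfolding al_def by linarith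
    have alx: "\<bar>al\<bar> \<le> norm x" unfolding al_def using Cauchy_Schwarz_ineq2[of a x] na by simp
    have ax2: "al^2 \<le> (norm x)^2" using alx by (metis abs_le_square_iff abs_norm_cancel)
    have xz2: "(norm x)^2 \<le> rh^2" using xy(1) rh_def by (simp add: power_mono)
    define W where "W = sqrt(rh^2 - al^2)"
    have W0: "W \<ge> 0" and W2: "W^2 = rh^2 - al^2" using ax2 xz2 by (simp_all add: W_def)
    have lx: "lam \<bullet> x \<le> c * al + s * W"
    proof -
      have "lam \<bullet> x \<le> c * al + s * sqrt((norm x)^2 - al^2)"
        using decomp[OF na nl, of x] unfolding c_def s_def al_def by simp
      also have "\<dots> \<le> c * al + s * W"
        unfolding W_def using s0 xz2 by (simp add: mult_left_mono)
      finally show ?thesis .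
    qed
    have W2': "W^2 = rh^2 * A - 2 * rh * dl - 1" unfolding W2 al A_def by (simp add: power2_eq_square algebra_simps)
    have fi: "dl / q \<le> rh * q - W" unfolding q_def by (rule final_ineq[OF A_def A0 rh0 W0 W2'])
    have "s * (dl / q) \<le> s * (rh * q - W)" using fi s0 by (intro mult_left_mono) auto
    then have "c + s * (dl / q) \<le> - (c * al + s * W) + rh * (- c * dl + s * q)"
      unfolding al by (simp add: algebra_simps)
    then show ?thesis unfolding r3 P using lx by linarith
  qed
  then show ?thesis using gy y0 unfolding b_def rh_def by simp
qed

end

theorem theorem9:
  fixes a lam :: "real^'n" and d :: "real^'m"
  assumes "norm a = 1" and "norm d < 1" and "norm lam = 1"
    and "lam \<noteq> a" and "lam \<noteq> - a"
  shows "interior (C_set lam a d) \<inter> S_set a d = {}"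
proof (rule ccontr)
  note na = assms(1) and nd1 = assms(2) and nl = assms(3)
  have cl: "\<bar>lam \<bullet> a\<bar> < 1"
  proof -
    have le: "\<bar>lam \<bullet> a\<bar> \<le> 1" using Cauchy_Schwarz_ineq2[of lam a] na nl by simp
    have "\<bar>lam \<bullet> a\<bar> \<noteq> norm lam * norm a"
      unfolding norm_cauchy_schwarz_abs_eq using na nl assms(4,5) by (auto simp: minus_equation_iff)
    then show ?thesis using le na nl by simp
  qed
  have nd: "norm d \<le> 1" using nd1 by simp
  assume "interior (C_set lam a d) \<inter> S_set a d \<noteq> {}"
  then obtain x y where pI: "(x, y) \<in> interior (C_set lam a d)" and pS: "(x, y) \<in> S_set a d" by auto
  from pS have xy: "norm x \<le> norm y" "a \<bullet> x + d \<bullet> y = -1" unfolding S_set_def by auto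
  from key[OF na nl nd cl nd1 xy] have y0: "y \<noteq> 0"
    and K: "r_fun lam a d (y /\<^sub>R norm y) \<le> - (lam \<bullet> x) + grad_phi lam a d (y /\<^sub>R norm y) \<bullet> y" by auto
  obtain e where e: "e > 0" "ball (x, y) e \<subseteq> C_set lam a d" using pI mem_interior by blast
  have "dist (x, y) (x - (e/2) *\<^sub>R lam, y) = e / 2"
    using e(1) nl by (simp add: dist_Pair_Pair dist_norm)
  then have "(x - (e/2) *\<^sub>R lam, y) \<in> C_set lam a d" using e by auto
  moreover have "norm (y /\<^sub>R norm y) = 1" using y0 by simp
  ultimately have "- (lam \<bullet> (x - (e/2) *\<^sub>R lam)) + grad_phi lam a d (y /\<^sub>R norm y) \<bullet> y \<le> r_fun lam a d (y /\<^sub>R norm y)"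
    unfolding C_set_def by blast
  moreover have "lam \<bullet> (x - (e/2) *\<^sub>R lam) = lam \<bullet> x - e/2"
    using nl by (simp add: inner_diff_right dot_square_norm)
  ultimately show False using K e(1) by linarith
qed

end
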